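(* With the subspaces defined in the context (for any $a,b$ with $|a|^2+|b|^2=1$, $a,b\ne0$), and for unit vectors $\ket{s_A},\ket{s_B}\in\mathbb C^2$ with $p[\Pi(h)]=(\bra{s_A}\otimes\bra{s_B})\Pi(h)(\ket{s_A}\otimes\ket{s_B})$: (1) $\mathfrak H_{23W}\vee\mathfrak H_{23X}\vee\mathfrak H_{23Y}\vee\mathfrak H_{14Z}=\mathbb C^2\otimes\mathbb C^2$, and for every choice of unit vectors $\ket{s_A},\ket{s_B}$, $p[\Pi(\mathfrak H_{23W})]+p[\Pi(\mathfrak H_{23X})]+p[\Pi(\mathfrak H_{23Y})]+p[\Pi(\mathfrak H_{14Z})]\ge p[\Pi(\mathfrak H_{23W}\vee\mathfrak H_{23X}\vee\mathfrak H_{23Y}\vee\mathfrak H_{14Z})]=1.$ (2) The quantity $\Omega'=p[\Pi(\mathfrak H_{23W})]+p[\Pi(\mathfrak H_{23X})]-p[\Pi(\mathfrak H_{23W}\vee\mathfrak H_{23X})]$ takes both strictly positive and strictly negative values as $\ket{s_A},\ket{s_B}$ range over unit vectors; i.e. this two-term Boole inequality fails for some product states.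
   Context: In $\mathbb C^2$ let $\ket0=(0,1)^T$, $\ket1=(1,0)^T$, and let $U=\begin{pmatrix}a&b\\-\bar b&\bar a\end{pmatrix}$ with $|a|^2+|b|^2=1$, $a,b\neq0$; the same $U$ acts on both factors of $\mathbb C^2\otimes\mathbb C^2$. Define one-dimensional subspaces (span of the indicated vector): $\mathfrak H_{1W}=\langle\ket1\otimes\ket1\rangle$, $\mathfrak H_{2W}=\langle\ket1\otimes\ket0\rangle$, $\mathfrak H_{3W}=\langle\ket0\otimes\ket1\rangle$, $\mathfrak H_{4W}=\langle\ket0\otimes\ket0\rangle$; $\mathfrak H_{1X}=\langle\ket1\otimes U\ket1\rangle$, $\mathfrak H_{2X}=\langle\ket1\otimes U\ket0\rangle$, $\mathfrak H_{3X}=\langle\ket0\otimes U\ket1\rangle$, $\mathfrak H_{4X}=\langle\ket0\otimes U\ket0\rangle$; $\mathfrak H_{1Y}=\langle U\ket1\otimes\ket1\rangle$, $\mathfrak H_{2Y}=\langle U\ket1\otimes\ket0\rangle$, $\mathfrak H_{3Y}=\langle U\ket0\otimes\ket1\rangle$, $\mathfrak H_{4Y}=\langle U\ket0\otimes\ket0\rangle$; $\mathfrak H_{1Z}=\langle U\ket1\otimes U\ket1\rangle$, $\mathfrak H_{2Z}=\langle U\ket1\otimes U\ket0\rangle$, $\mathfrak H_{3Z}=\langle U\ket0\otimes U\ket1\rangle$, $\mathfrak H_{4Z}=\langle U\ket0\otimes U\ket0\rangle$. For $V\in\{W,X,Y,Z\}$ let $\mathfrak H_{14V}=\mathfrak H_{1V}\vee\mathfrak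 H_{4V}$ and $\mathfrak H_{23V}=\mathfrak H_{2V}\vee\mathfrak H_{3V}$, where $h\vee h'=\mathrm{span}(h\cup h')$. $\Pi(h)$ is the orthogonal projector onto $h$. *)

theory Defs
  imports "HOL-Analysis.Analysis"
begin

type_synonym qubit = "complex ^ 2"
type_synonym qubit2 = "complex ^ (2 \<times> 2)"

definition cinner :: "complex ^ 'n \<Rightarrow> complex ^ 'n \<Rightarrow> complex" where
  "cinner x y = (\<Sum>i\<in>UNIV. cnj (x $ i) * y $ i)"

definition tensor :: "complex ^ 'n \<Rightarrow> complex ^ 'm \<Rightarrow> complex ^ ('n \<times> 'm)" where
  "tensor u v = (\<chi> p. u $ fst p * v $ snd p)"

definition ket0 :: qubit where "ket0 = vector [0, 1]"
definition ket1 :: qubit where "ket1 = vector [1, 0]"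

definition Uop :: "complex \<Rightarrow> complex \<Rightarrow> complex ^ 2 ^ 2" where
  "Uop a b = vector [vector [a, b], vector [- cnj b, cnj a]]"

definition join :: "qubit2 set \<Rightarrow> qubit2 set \<Rightarrow> qubit2 set" (infixl "\<squnion>\<^sub>H" 65) where
  "join h h' = vec.span (h \<union> h')"

definition Proj :: "qubit2 set \<Rightarrow> qubit2 \<Rightarrow> qubit2" where
  "Proj h x = (THE y. y \<in> h \<and> (\<forall>z\<in>h. cinner z (x - y) = 0))"

text \<open>p[Pi(h)] = (<sA| (x) <sB|) Pi(h) (|sA> (x) |sB>); this is real, we take the real part.\<close>
definition prob :: "qubit \<Rightarrow> qubit \<Rightarrow> qubit2 set \<Rightarrow> real" where
  "prob sA sB h = Re (cinner (tensor sA sB) (Proj h (tensor sA sB)))"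

datatype frame = W | X | Y | Z

definition opA :: "complex \<Rightarrow> complex \<Rightarrow> frame \<Rightarrow> complex ^ 2 ^ 2" where
  "opA a b V = (if V = Y \<or> V = Z then Uop a b else mat 1)"
definition opB :: "complex \<Rightarrow> complex \<Rightarrow> frame \<Rightarrow> complex ^ 2 ^ 2" where
  "opB a b V = (if V = X \<or> V = Z then Uop a b else mat 1)"

definition H1 :: "complex \<Rightarrow> complex \<Rightarrow> frame \<Rightarrow> qubit2 set" where
  "H1 a b V = vec.span {tensor (opA a b V *v ket1) (opB a b V *v ket1)}"
definition H2 :: "complex \<Rightarrow> complex \<Rightarrow> frame \<Rightarrow> qubit2 set" where
  "H2 a b V = vec.span {tensor (opA a b V *v ket1) (opB a b V *v ket0)}"
definition H3 :: "complex \<Rightarrow> complex \<Rightarrow> frame \<Rightarrow> qubit2 set" where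
  "H3 a b V = vec.span {tensor (opA a b V *v ket0) (opB a b V *v ket1)}"
definition H4 :: "complex \<Rightarrow> complex \<Rightarrow> frame \<Rightarrow> qubit2 set" where
  "H4 a b V = vec.span {tensor (opA a b V *v ket0) (opB a b V *v ket0)}"

definition H14 :: "complex \<Rightarrow> complex \<Rightarrow> frame \<Rightarrow> qubit2 set" where
  "H14 a b V = H1 a b V \<squnion>\<^sub>H H4 a b V"
definition H23 :: "complex \<Rightarrow> complex \<Rightarrow> frame \<Rightarrow> qubit2 set" where
  "H23 a b V = H2 a b V \<squnion>\<^sub>H H3 a b V"

end

theory Submission imports Defs begin

lemma UNIV_22: "(UNIV :: (2\<times>2) set) = {(1,1),(1,2),(2,1),(2,2)}"
  using exhaust_2 by auto

lemma sum_22: "sum f (UNIV :: (2\<times>2) set) = f (1,1) + f (1,2) + f (2,1) + f (2,2)"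
  by (simp add: UNIV_22 add.assoc)

lemma cinner_tensor: "cinner (tensor u v) (tensor u' v') = cinner u u' * cinner (v :: complex^'m) v'"
  unfolding cinner_def tensor_def
  by (simp add: UNIV_Times_UNIV[symmetric] sum.cartesian_product sum_product mult_ac split_beta del: UNIV_Times_UNIV)

lemma cinner_add_right: "cinner x (y + z) = cinner x y + cinner x z"
  unfolding cinner_def by (simp add: distrib_left sum.distrib)
lemma cinner_diff_right: "cinner x (y - z) = cinner x y - cinner x z"
  unfolding cinner_def by (simp add: right_diff_distrib sum_subtractf)
lemma cinner_scale_right: "cinner x (c *s y) = c * cinner x y"
  unfolding cinner_def by (simp add: sum_distrib_left mult_ac)
lemma cinner_add_left: "cinner (x + y) z = cinner x z + cinner y z"
  unfolding cinner_def by (simp add: distrib_right sum.distrib)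
lemma cinner_scale_left: "cinner (c *s x) y = cnj c * cinner x y"
  unfolding cinner_def by (simp add: sum_distrib_left mult_ac)
lemma cinner_zero_left: "cinner 0 y = 0"
  unfolding cinner_def by simp

lemma cinner_self: "cinner x x = of_real (\<Sum>i\<in>UNIV. (cmod (x $ i))\<^sup>2)"
  unfolding cinner_def by (simp add: complex_norm_square mult.commute del: of_real_power)

lemma cinner_self_eq0: "cinner x x = 0 \<Longrightarrow> x = 0"
proof -
  assume "cinner x x = 0"
  hence "(\<Sum>i\<in>UNIV. (cmod (x $ i))\<^sup>2) = 0" unfolding cinner_self of_real_eq_0_iff .
  hence "\<forall>i\<in>UNIV. (cmod (x $ i))\<^sup>2 = 0" by (subst (asm) sum_nonneg_eq_0_iff) auto
  thus "x = 0" by (simp add: vec_eq_iff)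
qed

lemma Proj_eq:
  assumes "vec.subspace h" "y \<in> h" "\<forall>z\<in>h. cinner z (x - y) = 0"
  shows "Proj h x = y"
  unfolding Proj_def
proof (rule the_equality)
  show "y \<in> h \<and> (\<forall>z\<in>h. cinner z (x - y) = 0)" using assms by auto
next
  fix y' assume y': "y' \<in> h \<and> (\<forall>z\<in>h. cinner z (x - y') = 0)"
  have d: "y' - y \<in> h" using assms y' by (simp add: vec.subspace_diff)
  have "cinner (y' - y) (x - y) = 0" "cinner (y' - y) (x - y') = 0" using d assms y' by auto
  hence "cinner (y' - y) ((x - y) - (x - y')) = 0" by (simp add: cinner_diff_right)
  hence "cinner (y' - y) (y' - y) = 0" by simp
  hence "y' - y = 0" by (rule cinner_self_eq0)
  thus "y' = y" by simp
qed

lemma cinner_commute: "cinner x y = cnj (cinner y x)"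
  unfolding cinner_def by (simp add: mult.commute)

lemma join_spans: "vec.span {u} \<squnion>\<^sub>H vec.span {v} = vec.span {u, v}"
  unfolding join_def
proof (rule antisym)
  show "vec.span (vec.span {u} \<union> vec.span {v}) \<subseteq> vec.span {u, v}"
    by (rule vec.span_minimal) (auto intro: vec.span_mono[THEN subsetD])
  show "vec.span {u, v} \<subseteq> vec.span (vec.span {u} \<union> vec.span {v})"
    by (rule vec.span_mono) (auto intro: vec.span_base)
qed

lemma orth_span:
  assumes "\<forall>e\<in>S. cinner e w = 0" "z \<in> vec.span S"
  shows "cinner z w = 0"
proof -
  have "vec.span S \<subseteq> {z. cinner z w = 0}"
    by (rule vec.span_minimal) (use assms(1) in \<open>auto simp: vec.subspace_def cinner_zero_left cinner_add_left cinner_scale_left\<close>)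
  thus ?thesis using assms(2) by auto
qed

lemma Proj2:
  assumes "cinner e1 e1 = 1" "cinner e2 e2 = 1" "cinner e1 e2 = 0"
  shows "Proj (vec.span {e1, e2}) x = cinner e1 x *s e1 + cinner e2 x *s e2"
proof (rule Proj_eq)
  show "vec.subspace (vec.span {e1, e2})" by simp
  show "cinner e1 x *s e1 + cinner e2 x *s e2 \<in> vec.span {e1, e2}"
    by (intro vec.span_add vec.span_scale vec.span_base) auto
  have e21: "cinner e2 e1 = 0" using assms(3) cinner_commute[of e2 e1] by simp
  show "\<forall>z\<in>vec.span {e1, e2}. cinner z (x - (cinner e1 x *s e1 + cinner e2 x *s e2)) = 0"
    using orth_span[of "{e1,e2}" "x - (cinner e1 x *s e1 + cinner e2 x *s e2)"]
    using assms e21 by (auto simp: cinner_diff_right cinner_add_right cinner_scale_right)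
qed

lemma prob2:
  assumes "cinner e1 e1 = 1" "cinner e2 e2 = 1" "cinner e1 e2 = 0"
  shows "prob sA sB (vec.span {e1, e2}) = (cmod (cinner e1 (tensor sA sB)))\<^sup>2 + (cmod (cinner e2 (tensor sA sB)))\<^sup>2"
proof -
  define s where "s = tensor sA sB"
  have "cinner s (Proj (vec.span {e1, e2}) s) = cinner e1 s * cnj (cinner e1 s) + cinner e2 s * cnj (cinner e2 s)"
    unfolding Proj2[OF assms] by (simp add: cinner_add_right cinner_scale_right cinner_commute[of s])
  thus ?thesis unfolding prob_def s_def[symmetric]
    by (simp only: complex_norm_square[symmetric] of_real_add[symmetric] Re_complex_of_real)
qed

lemma Uket0: "Uop a b *v ket0 = vector [b, cnj a]"
  by (simp add: vec_eq_iff forall_2 matrix_vector_mult_def sum_2 Uop_def ket0_def)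
lemma Uket1: "Uop a b *v ket1 = vector [a, - cnj b]"
  by (simp add: vec_eq_iff forall_2 matrix_vector_mult_def sum_2 Uop_def ket1_def)

lemma cinner2: "cinner (vector [x1, x2] :: complex^2) (vector [y1, y2]) = cnj x1 * y1 + cnj x2 * y2"
  by (simp add: cinner_def sum_2)
lemma cinner2': "cinner (vector [x1, x2] :: complex^2) y = cnj x1 * y$1 + cnj x2 * y$2"
  by (simp add: cinner_def sum_2)

lemma HW: "H23 a b W = vec.span {tensor ket1 ket0, tensor ket0 ket1}"
  by (simp add: H23_def H2_def H3_def opA_def opB_def join_spans)
lemma HX: "H23 a b X = vec.span {tensor ket1 (vector [b, cnj a]), tensor ket0 (vector [a, - cnj b])}"
  by (simp add: H23_def H2_def H3_def opA_def opB_def join_spans Uket0 Uket1)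
lemma HY: "H23 a b Y = vec.span {tensor (vector [a, - cnj b]) ket0, tensor (vector [b, cnj a]) ket1}"
  by (simp add: H23_def H2_def H3_def opA_def opB_def join_spans Uket0 Uket1)
lemma HZ: "H14 a b Z = vec.span {tensor (vector [a, - cnj b]) (vector [a, - cnj b]), tensor (vector [b, cnj a]) (vector [b, cnj a])}"
  by (simp add: H14_def H1_def H4_def opA_def opB_def join_spans Uket0 Uket1)

lemma ab1: "(cmod a)\<^sup>2 + (cmod b)\<^sup>2 = 1 \<Longrightarrow> cnj a * a + cnj b * b = 1"
  by (metis complex_norm_square mult.commute of_real_1 of_real_add)

lemma WX_UNIV:
  assumes "b \<noteq> 0"
  shows "H23 a b W \<squnion>\<^sub>H H23 a b X = UNIV"
proof -
  define w1 where "w1 = (tensor ket1 ket0 :: qubit2)"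
  define w2 where "w2 = (tensor ket0 ket1 :: qubit2)"
  define x1 where "x1 = (tensor ket1 (vector [b, cnj a]) :: qubit2)"
  define x2 where "x2 = (tensor ket0 (vector [a, - cnj b]) :: qubit2)"
  let ?S = "H23 a b W \<squnion>\<^sub>H H23 a b X"
  have sub: "vec.subspace ?S" unfolding join_def by simp
  have inS: "w1 \<in> ?S" "w2 \<in> ?S" "x1 \<in> ?S" "x2 \<in> ?S"
    unfolding join_def HW HX w1_def w2_def x1_def x2_def
    by (auto intro!: vec.span_base)
  have cb: "cnj b \<noteq> 0" using assms by simp
  have a12: "axis (1,2) 1 = w1" "axis (2,1) 1 = w2"
    by (simp_all add: vec_eq_iff split_paired_All forall_2 axis_def tensor_def w1_def w2_def ket0_def ket1_def)
  have a11: "axis (1,1) 1 = (1/b) *s (x1 - cnj a *s w1)"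
    using assms by (simp add: vec_eq_iff split_paired_All forall_2 axis_def tensor_def w1_def x1_def ket0_def ket1_def)
  have a22: "axis (2,2) 1 = (-1/cnj b) *s (x2 - a *s w2)"
    using cb by (simp add: vec_eq_iff split_paired_All forall_2 axis_def tensor_def w2_def x2_def ket0_def ket1_def)
  have ax: "axis i 1 \<in> ?S" for i :: "2\<times>2"
  proof -
    obtain p q where i: "i = (p, q)" by (cases i)
    show ?thesis unfolding i using exhaust_2[of p] exhaust_2[of q]
      using a11 a12 a22 inS sub
      by (auto intro!: vec.subspace_scale vec.subspace_diff)
  qed
  have "x \<in> ?S" for x :: qubit2
  proof -
    have "(\<Sum>i\<in>UNIV. (x$i) *s axis i 1) \<in> ?S"
      by (rule vec.subspace_sum[OF sub]) (intro vec.subspace_scale[OF sub] ax)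
    thus ?thesis by (simp add: basis_expansion)
  qed
  thus ?thesis by auto
qed

lemma kv: "ket0$1 = 0" "ket0$2 = 1" "ket1$1 = 1" "ket1$2 = 0"
  by (simp_all add: ket0_def ket1_def)

lemma ck0: "cinner ket0 v = v$2" and ck1: "cinner ket1 v = v$1"
  and ck00: "cinner ket0 ket0 = 1" and ck11: "cinner ket1 ket1 = 1" and ck01: "cinner ket0 ket1 = 0"
  and ck10: "cinner ket1 ket0 = 0"
  by (simp_all add: ket0_def ket1_def cinner2 cinner2')

lemma ab_comm: "cnj a * a + cnj b * b = 1 \<Longrightarrow> b * cnj b + a * cnj a = 1"
  by (simp add: mult.commute add.commute)

lemma pW: "prob sA sB (H23 a b W) = (cmod (sA$1))\<^sup>2 * (cmod (sB$2))\<^sup>2 + (cmod (sA$2))\<^sup>2 * (cmod (sB$1))\<^sup>2"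
  unfolding HW by (subst prob2) (simp_all add: kv cinner_tensor ck0 ck1 ck00 ck11 ck01 ck10 norm_mult power_mult_distrib)

lemma pX: assumes "cnj a * a + cnj b * b = 1"
  shows "prob sA sB (H23 a b X) = (cmod (sA$1))\<^sup>2 * (cmod (cnj b * sB$1 + a * sB$2))\<^sup>2
     + (cmod (sA$2))\<^sup>2 * (cmod (cnj a * sB$1 - b * sB$2))\<^sup>2"
  unfolding HX by (subst prob2) (use assms in \<open>simp_all add: kv ab_comm[OF assms] cinner_tensor ck0 ck1 ck00 ck11 ck01 ck10 norm_mult power_mult_distrib cinner2 cinner2' mult.commute\<close>)

lemma pY: assumes "cnj a * a + cnj b * b = 1"
  shows "prob sA sB (H23 a b Y) = (cmod (cnj a * sA$1 - b * sA$2))\<^sup>2 * (cmod (sB$2))\<^sup>2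
     + (cmod (cnj b * sA$1 + a * sA$2))\<^sup>2 * (cmod (sB$1))\<^sup>2"
  unfolding HY by (subst prob2) (use assms in \<open>simp_all add: kv ab_comm[OF assms] cinner_tensor ck0 ck1 ck00 ck11 ck01 ck10 norm_mult power_mult_distrib cinner2 cinner2' mult.commute\<close>)

lemma pZ: assumes "cnj a * a + cnj b * b = 1"
  shows "prob sA sB (H14 a b Z) = (cmod (cnj a * sA$1 - b * sA$2))\<^sup>2 * (cmod (cnj a * sB$1 - b * sB$2))\<^sup>2
     + (cmod (cnj b * sA$1 + a * sA$2))\<^sup>2 * (cmod (cnj b * sB$1 + a * sB$2))\<^sup>2"
  unfolding HZ by (subst prob2) (use assms in \<open>simp_all add: kv ab_comm[OF assms] cinner_tensor ck0 ck1 ck00 ck11 ck01 ck10 norm_mult power_mult_distrib cinner2 cinner2' mult.commute\<close>)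

lemma g_nonneg:
  fixes x y u v :: real
  assumes "0 \<le> x" "x \<le> 1" "0 \<le> y" "y \<le> 1" "0 \<le> u" "u \<le> 1" "0 \<le> v" "v \<le> 1"
  shows "x + y - x*y - x * v - u*y + u * v \<ge> 0"
proof (cases "y + v \<le> 1")
  case True
  have "x*(1 - y - v) \<ge> 0" using True assms by simp
  moreover have "y*(1-u) \<ge> 0" "u * v \<ge> 0" using assms by simp_all
  ultimately show ?thesis by (simp add: algebra_simps)
next
  case False
  have "x*(1 - y - v) \<ge> 1 - y - v" using False assms
    by (metis diff_ge_0_iff_ge linorder_not_le mult_le_cancel_right1 mult.commute less_le_not_le mult_right_mono_neg diff_diff_eq)
  moreover have "u*(y - v) \<le> max 0 (y - v)"
  proof (cases "y \<ge> v")
    case True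
    hence "u*(y - v) \<le> y - v" using assms by (intro mult_left_le_one_le) auto
    thus ?thesis by simp
  next
    case False
    hence "u*(y - v) \<le> 0" using assms by (intro mult_nonneg_nonpos) auto
    thus ?thesis by simp
  qed
  ultimately show ?thesis using assms by (auto simp: algebra_simps max_def split: if_splits)
qed

lemma unit2: "norm (s::qubit) = 1 \<Longrightarrow> (cmod (s$1))\<^sup>2 + (cmod (s$2))\<^sup>2 = 1"
  by (simp add: norm_vec_def L2_set_def sum_2)

lemma unitU:
  assumes "cnj a * a + cnj b * b = 1"
  shows "(cmod (cnj b * s1 + a * s2))\<^sup>2 + (cmod (cnj a * s1 - b * s2))\<^sup>2 = (cmod s1)\<^sup>2 + (cmod s2)\<^sup>2"
proof -
  have "complex_of_real ((cmod (cnj b * s1 + a * s2))\<^sup>2 + (cmod (cnj a * s1 - b * s2))\<^sup>2)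
      = (cnj b * s1 + a * s2) * cnj (cnj b * s1 + a * s2) + (cnj a * s1 - b * s2) * cnj (cnj a * s1 - b * s2)"
    by (simp only: of_real_add complex_norm_square)
  also have "\<dots> = (cnj a * a + cnj b * b) * (s1 * cnj s1 + s2 * cnj s2)"
    by (simp add: algebra_simps)
  also have "\<dots> = complex_of_real ((cmod s1)\<^sup>2 + (cmod s2)\<^sup>2)"
    using assms by (simp only: of_real_add complex_norm_square mult_1_left)
  finally show ?thesis by (simp only: of_real_eq_iff)
qed

lemma join_UNIV: "UNIV \<squnion>\<^sub>H h = UNIV"
  by (simp add: join_def)

lemma prob_UNIV: "norm sA = 1 \<Longrightarrow> norm sB = 1 \<Longrightarrow> prob sA sB UNIV = 1"
proof -
  assume u: "norm sA = 1" "norm sB = 1"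
  have "Proj UNIV x = x" for x by (rule Proj_eq) (auto simp: cinner_def)
  hence "prob sA sB UNIV = (\<Sum>i\<in>UNIV. (cmod (tensor sA sB $ i))\<^sup>2)"
    by (simp add: prob_def cinner_self)
  also have "\<dots> = ((cmod (sA$1))\<^sup>2 + (cmod (sA$2))\<^sup>2) * ((cmod (sB$1))\<^sup>2 + (cmod (sB$2))\<^sup>2)"
    by (simp add: sum_22 tensor_def norm_mult power_mult_distrib algebra_simps)
  also have "\<dots> = 1" using unit2[OF u(1)] unit2[OF u(2)] by simp
  finally show ?thesis .
qed

theorem mainTheorem6:
  fixes a b :: complex
  assumes "(cmod a)\<^sup>2 + (cmod b)\<^sup>2 = 1" and "a \<noteq> 0" and "b \<noteq> 0"
  shows "H23 a b W \<squnion>\<^sub>H H23 a b X \<squnion>\<^sub>H H23 a b Y \<squnion>\<^sub>H H14 a b Z = UNIV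
     \<and> (\<forall>sA sB :: qubit. norm sA = 1 \<and> norm sB = 1 \<longrightarrow>
          prob sA sB (H23 a b W) + prob sA sB (H23 a b X) + prob sA sB (H23 a b Y)
            + prob sA sB (H14 a b Z)
          \<ge> prob sA sB (H23 a b W \<squnion>\<^sub>H H23 a b X \<squnion>\<^sub>H H23 a b Y \<squnion>\<^sub>H H14 a b Z)
        \<and> prob sA sB (H23 a b W \<squnion>\<^sub>H H23 a b X \<squnion>\<^sub>H H23 a b Y \<squnion>\<^sub>H H14 a b Z) = 1)
     \<and> (\<exists>sA sB :: qubit. norm sA = 1 \<and> norm sB = 1 \<and>
          prob sA sB (H23 a b W) + prob sA sB (H23 a b X)
            - prob sA sB (H23 a b W \<squnion>\<^sub>H H23 a b X) > 0)
     \<and> (\<exists>sA sB :: qubit. norm sA = 1 \<and> norm sB = 1 \<and>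
          prob sA sB (H23 a b W) + prob sA sB (H23 a b X)
            - prob sA sB (H23 a b W \<squnion>\<^sub>H H23 a b X) < 0)"
proof -
  have ab: "cnj a * a + cnj b * b = 1" using ab1[OF assms(1)] .
  have WX: "H23 a b W \<squnion>\<^sub>H H23 a b X = UNIV" using WX_UNIV[OF assms(3)] .
  have J: "H23 a b W \<squnion>\<^sub>H H23 a b X \<squnion>\<^sub>H H23 a b Y \<squnion>\<^sub>H H14 a b Z = UNIV"
    unfolding WX join_UNIV ..
  have P1: "prob sA sB (H23 a b W) + prob sA sB (H23 a b X) + prob sA sB (H23 a b Y)
            + prob sA sB (H14 a b Z) \<ge> 1" if u: "norm sA = 1" "norm sB = 1" for sA sB :: qubit
  proof -
    define x where "x = (cmod (sA$2))\<^sup>2"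
    define y where "y = (cmod (sB$2))\<^sup>2"
    define x' where "x' = (cmod (cnj b * sA$1 + a * sA$2))\<^sup>2"
    define y' where "y' = (cmod (cnj b * sB$1 + a * sB$2))\<^sup>2"
    have A1: "(cmod (sA$1))\<^sup>2 = 1 - x" using unit2[OF u(1)] x_def by simp
    have B1: "(cmod (sB$1))\<^sup>2 = 1 - y" using unit2[OF u(2)] y_def by simp
    have AU1: "(cmod (cnj a * sA$1 - b * sA$2))\<^sup>2 = 1 - x'"
      using unitU[OF ab, of "sA$1" "sA$2"] unit2[OF u(1)] x'_def by simp
    have BU1: "(cmod (cnj a * sB$1 - b * sB$2))\<^sup>2 = 1 - y'"
      using unitU[OF ab, of "sB$1" "sB$2"] unit2[OF u(2)] y'_def by simp
    have bx: "0 \<le> x" "x \<le> 1" "0 \<le> y" "y \<le> 1" "0 \<le> x'" "x' \<le> 1" "0 \<le> y'" "y' \<le> 1"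
      using A1 B1 AU1 BU1 x_def y_def x'_def y'_def
      by (auto simp del: norm_ge_zero intro: order_trans[OF _ zero_le_power2] )
       (metis diff_ge_0_iff_ge zero_le_power2)+
    have "x + y - x*y - x*y' - x'*y + x'*y' \<ge> 0" using g_nonneg[OF bx] .
    thus ?thesis
      unfolding pW pX[OF ab] pY[OF ab] pZ[OF ab] A1 B1 AU1 BU1
      unfolding x_def[symmetric] y_def[symmetric] x'_def[symmetric] y'_def[symmetric]
      by (simp add: algebra_simps)
  qed
  have k0: "norm ket0 = 1" "norm ket1 = 1"
    by (simp_all add: norm_vec_def L2_set_def sum_2 kv)
  have ca: "(cmod a)\<^sup>2 > 0" "(cmod b)\<^sup>2 > 0" using assms by simp_all
  have E1: "prob ket0 ket1 (H23 a b W) + prob ket0 ket1 (H23 a b X)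
            - prob ket0 ket1 (H23 a b W \<squnion>\<^sub>H H23 a b X) > 0"
    unfolding WX prob_UNIV[OF k0(1) k0(2)] pW pX[OF ab] using ca by (simp add: kv)
  have cb1: "(cmod b)\<^sup>2 < 1" using ca assms(1) by linarith
  have E2: "prob ket0 ket0 (H23 a b W) + prob ket0 ket0 (H23 a b X)
            - prob ket0 ket0 (H23 a b W \<squnion>\<^sub>H H23 a b X) < 0"
    unfolding WX prob_UNIV[OF k0(1) k0(1)] pW pX[OF ab] using cb1 by (simp add: kv)
  show ?thesis
    using J P1 prob_UNIV E1 E2 k0 by (auto simp only: J)
qed

end
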